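(* Let $S\subseteq V$ be fixed and let $R_1,\dots,R_T$ be $T$ independent IBSs drawn from $\Omega^n$. Let $\mu=\mathbb{E}[Z_j(S)]$. Then for every $\lambda>0$: $$\Pr\Big[\sum_{j=1}^T Z_j(S)-T\mu\ge\lambda\Big]\le\exp\!\left(-\frac{\lambda^2}{\frac{2}{3}\rho\lambda+2p(S)\mu T}\right),$$ $$\Pr\Big[\sum_{j=1}^T Z_j(S)-T\mu\le-\lambda\Big]\le\exp\!\left(-\frac{\lambda^2}{2p(S)\mu T}\right).$$
   Context: Setting: $G=(V,E)$ is a directed graph under the Independent Cascade model with edge probabilities $p(u,v)\in(0,1)$. Each node has benefit $b(u)\ge0$, and $\Gamma=\sum_u b(u)>0$. For each node $u$, $\gamma(u)=1-\prod_{v\in N_{in}(u)}(1-p(v,u))$, and $\Phi=\sum_u\gamma(u)b(u)>0$. IBS distribution $\Omega^n$: pick a source $u$ with probability $\gamma(u)b(u)/\Phi$. Then output the set of nodes that can reach $u$ in a random live-edge graph (each edge kept independently with probability $p(e)$), conditioned on at least one in-edge of $u$ being kept. For $S\subseteq V$ and a sample $R_j$ define the following quantities: - $X_j(S)=\min\{1,|S\cap R_j|\}$; - $\mu_{\min}(S)=\sum_{v\in S}(1-\gamma(v))b(v)/\Gamma$; - $\rho=\Phi/\Gamma$; - $\mu_{\max}(S)=\rho+\mu_{\min}(S)$; - $Z_j(S)=\rho X_j(S)+\mu_{\min}(S)$; - $p(S)=\min\{\rho,\ \mu_{\max}(S)+\mu_{\min}(S)-2\sqrt{\mu_{\min}(S)\mu_{\max}(S)}\}$.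 *)

theory Defs
  imports "HOL-Probability.Probability"
begin

text \<open>Directed graph given by a finite vertex set V and an edge set E (pairs (v,u) = edge v to u);
  p gives edge probabilities, b node benefits.\<close>

definition N_in :: "('a \<times> 'a) set \<Rightarrow> 'a \<Rightarrow> 'a set" where
  "N_in E u = {v. (v, u) \<in> E}"

definition gamma :: "('a \<times> 'a) set \<Rightarrow> ('a \<times> 'a \<Rightarrow> real) \<Rightarrow> 'a \<Rightarrow> real" where
  "gamma E p u = 1 - (\<Prod>v\<in>N_in E u. 1 - p (v, u))"

definition Gamma :: "'a set \<Rightarrow> ('a \<Rightarrow> real) \<Rightarrow> real" where
  "Gamma V b = (\<Sum>u\<in>V. b u)"

definition Phi :: "'a set \<Rightarrow> ('a \<times> 'a) set \<Rightarrow> ('a \<times> 'a \<Rightarrow> real) \<Rightarrow> ('a \<Rightarrow> real) \<Rightarrow> real" where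
  "Phi V E p b = (\<Sum>u\<in>V. gamma E p u * b u)"

definition rho :: "'a set \<Rightarrow> ('a \<times> 'a) set \<Rightarrow> ('a \<times> 'a \<Rightarrow> real) \<Rightarrow> ('a \<Rightarrow> real) \<Rightarrow> real" where
  "rho V E p b = Phi V E p b / Gamma V b"

definition live_pmf :: "('a \<times> 'a) set \<Rightarrow> ('a \<times> 'a \<Rightarrow> real) \<Rightarrow> ('a \<times> 'a \<Rightarrow> bool) pmf" where
  "live_pmf E p = Pi_pmf E False (\<lambda>e. bernoulli_pmf (p e))"

definition live_edges :: "('a \<times> 'a) set \<Rightarrow> ('a \<times> 'a \<Rightarrow> bool) \<Rightarrow> ('a \<times> 'a) set" where
  "live_edges E f = {e \<in> E. f e}"

definition reach_set :: "'a set \<Rightarrow> ('a \<times> 'a) set \<Rightarrow> ('a \<times> 'a \<Rightarrow> bool) \<Rightarrow> 'a \<Rightarrow> 'a set" where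
  "reach_set V E f u = {v \<in> V. (v, u) \<in> (live_edges E f)\<^sup>*}"

definition source_pmf :: "'a set \<Rightarrow> ('a \<times> 'a) set \<Rightarrow> ('a \<times> 'a \<Rightarrow> real) \<Rightarrow> ('a \<Rightarrow> real) \<Rightarrow> 'a pmf" where
  "source_pmf V E p b =
     embed_pmf (\<lambda>u. if u \<in> V then gamma E p u * b u / Phi V E p b else 0)"

definition ibs_pmf :: "'a set \<Rightarrow> ('a \<times> 'a) set \<Rightarrow> ('a \<times> 'a \<Rightarrow> real) \<Rightarrow> ('a \<Rightarrow> real) \<Rightarrow> 'a set pmf" where
  "ibs_pmf V E p b =
     bind_pmf (source_pmf V E p b) (\<lambda>u.
       map_pmf (\<lambda>f. reach_set V E f u)
         (cond_pmf (live_pmf E p) {f. \<exists>v \<in> N_in E u. f (v, u)}))"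

definition X :: "'a set \<Rightarrow> 'a set \<Rightarrow> real" where
  "X S R = real (min 1 (card (S \<inter> R)))"

definition mu_min :: "'a set \<Rightarrow> ('a \<times> 'a) set \<Rightarrow> ('a \<times> 'a \<Rightarrow> real) \<Rightarrow> ('a \<Rightarrow> real) \<Rightarrow> 'a set \<Rightarrow> real" where
  "mu_min V E p b S = (\<Sum>v\<in>S. (1 - gamma E p v) * b v) / Gamma V b"

definition mu_max :: "'a set \<Rightarrow> ('a \<times> 'a) set \<Rightarrow> ('a \<times> 'a \<Rightarrow> real) \<Rightarrow> ('a \<Rightarrow> real) \<Rightarrow> 'a set \<Rightarrow> real" where
  "mu_max V E p b S = rho V E p b + mu_min V E p b S"

definition Z :: "'a set \<Rightarrow> ('a \<times> 'a) set \<Rightarrow> ('a \<times> 'a \<Rightarrow> real) \<Rightarrow> ('a \<Rightarrow> real) \<Rightarrow> 'a set \<Rightarrow> 'a set \<Rightarrow> real" where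
  "Z V E p b S R = rho V E p b * X S R + mu_min V E p b S"

definition pS :: "'a set \<Rightarrow> ('a \<times> 'a) set \<Rightarrow> ('a \<times> 'a \<Rightarrow> real) \<Rightarrow> ('a \<Rightarrow> real) \<Rightarrow> 'a set \<Rightarrow> real" where
  "pS V E p b S = min (rho V E p b)
     (mu_max V E p b S + mu_min V E p b S - 2 * sqrt (mu_min V E p b S * mu_max V E p b S))"

end

theory Submission
  imports Defs
begin


lemma nonneg_from_deriv:
  fixes f f' :: "real \<Rightarrow> real"
  assumes "\<And>x. 0 \<le> x \<Longrightarrow> (f has_real_derivative f' x) (at x)"
    and "\<And>x. 0 \<le> x \<Longrightarrow> f' x \<ge> 0" and "f 0 \<ge> 0" and "0 \<le> t"
  shows "f t \<ge> 0"
proof -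
  have "f 0 \<le> f t"
    by (rule deriv_nonneg_imp_mono[of 0 t f f']) (use assms in auto)
  thus ?thesis using assms(3) by linarith
qed

lemma H_nonneg:
  fixes t :: real assumes "0 \<le> t"
  shows "0 \<le> 3*t\<^sup>2 - 2*(3-t)*(exp t - 1 - t)"
proof -
  have h3: "0 \<le> 2 - 2*exp x + 2*x*exp x" if "0 \<le> x" for x :: real
  proof (rule nonneg_from_deriv[where f="\<lambda>x. 2 - 2*exp x + 2*x*exp x" and f'="\<lambda>x. 2*x*exp x"])
    fix y :: real
    show "((\<lambda>x. 2 - 2*exp x + 2*x*exp x) has_real_derivative 2*y*exp y) (at y)"
      by (auto intro!: derivative_eq_intros simp: algebra_simps)
  qed (use that in auto)
  have h2: "0 \<le> 2*x - 4*exp x + 4 + 2*x*exp x" if "0 \<le> x" for x :: real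
  proof (rule nonneg_from_deriv[where f="\<lambda>x. 2*x - 4*exp x + 4 + 2*x*exp x" and f'="\<lambda>x. 2 - 2*exp x + 2*x*exp x"])
    fix y :: real
    show "((\<lambda>x. 2*x - 4*exp x + 4 + 2*x*exp x) has_real_derivative 2 - 2*exp y + 2*y*exp y) (at y)"
      by (auto intro!: derivative_eq_intros simp: algebra_simps)
  qed (use that h3 in auto)
  show ?thesis
  proof (rule nonneg_from_deriv[where f="\<lambda>x. 3*x\<^sup>2 - 2*(3-x)*(exp x - 1 - x)" and f'="\<lambda>x. 2*x - 4*exp x + 4 + 2*x*exp x"])
    fix y :: real
    show "((\<lambda>x. 3*x\<^sup>2 - 2*(3-x)*(exp x - 1 - x)) has_real_derivative 2*y - 4*exp y + 4 + 2*y*exp y) (at y)"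
      by (auto intro!: derivative_eq_intros simp: algebra_simps power2_eq_square)
  qed (use assms h2 in auto)
qed

lemma bernstein_phi:
  fixes t :: real assumes "0 \<le> t" "t < 3"
  shows "exp t - 1 - t \<le> 3*t\<^sup>2 / (2*(3-t))"
  using H_nonneg[OF assms(1)] assms by (simp add: field_simps)

lemma upper_mgf:
  fixes q t :: real assumes q: "0 \<le> q" "q \<le> 1" and t: "0 \<le> t"
  shows "(1-q)*exp(-t*q) + q*exp(t*(1-q)) \<le> exp (q*(1-q)*(exp t - 1 - t))"
proof -
  have D: "1 \<le> 1-q+q*exp x" if "0 \<le> x" for x :: real
  proof -
    have "1 \<le> exp x" using that by simp
    hence "q*1 \<le> q*exp x" using q by (intro mult_left_mono) auto
    thus ?thesis by simp
  qed
  have F: "0 \<le> q*(1-q)*(exp t - 1 - t) + t*q - ln(1-q+q*exp t)"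
  proof (rule nonneg_from_deriv[where f="\<lambda>x. q*(1-q)*(exp x - 1 - x) + x*q - ln(1-q+q*exp x)"
        and f'="\<lambda>x. q*(1-q)*(exp x - 1) + q - q*exp x/(1-q+q*exp x)"])
    fix x :: real assume x: "0 \<le> x"
    have "0 < 1-q+q*exp x" using D[OF x] by linarith
    thus "((\<lambda>x. q*(1-q)*(exp x - 1 - x) + x*q - ln(1-q+q*exp x)) has_real_derivative
        q*(1-q)*(exp x - 1) + q - q*exp x/(1-q+q*exp x)) (at x)"
      by (auto intro!: derivative_eq_intros simp: algebra_simps)
    have pos: "0 < 1-q+q*exp x" using D[OF x] by linarith
    have eq: "q*(1-q)*(exp x - 1) + q - q*exp x/(1-q+q*exp x)
        = q*(1-q)*(exp x - 1) * ((1-q+q*exp x) - 1) / (1-q+q*exp x)"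
      using pos by (simp add: field_simps)
    have "0 \<le> q*(1-q)*(exp x - 1) * ((1-q+q*exp x) - 1)"
      using q D[OF x] x by (intro mult_nonneg_nonneg) auto
    thus "0 \<le> q*(1-q)*(exp x - 1) + q - q*exp x/(1-q+q*exp x)"
      using pos eq by simp
  qed (use t in auto)
  have pos: "0 < 1-q+q*exp t" using D[OF t] by linarith
  have "ln (1-q+q*exp t) \<le> q*(1-q)*(exp t - 1 - t) + t*q" using F by linarith
  hence "exp (ln (1-q+q*exp t)) \<le> exp (q*(1-q)*(exp t - 1 - t) + t*q)" by simp
  hence "1-q+q*exp t \<le> exp (q*(1-q)*(exp t - 1 - t)) * exp (t*q)" using pos by (simp add: exp_add)
  hence "(1-q+q*exp t) * exp(-t*q) \<le> exp (q*(1-q)*(exp t - 1 - t))"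
    by (simp add: exp_minus field_simps)
  moreover have "(1-q+q*exp t) * exp(-t*q) = (1-q)*exp(-t*q) + q*exp(t*(1-q))"
    by (simp add: algebra_simps flip: exp_add)
  ultimately show ?thesis by simp
qed


lemma lower_mgf:
  fixes q t c :: real assumes q: "0 \<le> q" "q \<le> 1" and t: "0 \<le> t"
    and hc: "\<And>y. 1 \<le> y \<Longrightarrow> q*(1-q)*y \<le> c*((1-q)*y+q)^2"
  shows "(1-q)*exp(t*q) + q*exp(-t*(1-q)) \<le> exp (c*t\<^sup>2/2)"
proof -
  have D: "1 \<le> (1-q)*exp x + q" if "0 \<le> x" for x :: real
  proof -
    have "1 \<le> exp x" using that by simp
    hence "(1-q)*1 \<le> (1-q)*exp x" using q by (intro mult_left_mono) auto
    thus ?thesis by simp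
  qed
  have F1: "0 \<le> c*x + (1-q) - (1-q)*exp x/((1-q)*exp x + q)" if "0 \<le> x" for x :: real
  proof (rule nonneg_from_deriv[where f="\<lambda>x. c*x + (1-q) - (1-q)*exp x/((1-q)*exp x + q)"
        and f'="\<lambda>x. c - q*(1-q)*exp x/((1-q)*exp x + q)^2"])
    fix y :: real assume y: "0 \<le> y"
    have pos: "0 < (1-q)*exp y + q" using D[OF y] by linarith
    show "((\<lambda>x. c*x + (1-q) - (1-q)*exp x/((1-q)*exp x + q)) has_real_derivative
        c - q*(1-q)*exp y/((1-q)*exp y + q)^2) (at y)"
      using pos by (auto intro!: derivative_eq_intros simp: field_simps power2_eq_square)
    have "q*(1-q)*exp y \<le> c*((1-q)*exp y+q)^2" using hc[of "exp y"] y by simp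
    thus "0 \<le> c - q*(1-q)*exp y/((1-q)*exp y + q)^2" using pos by (simp add: field_simps)
  qed (use that in auto)
  have F: "0 \<le> c*t\<^sup>2/2 - (ln ((1-q)*exp t + q) - t*(1-q))"
  proof (rule nonneg_from_deriv[where f="\<lambda>x. c*x\<^sup>2/2 - (ln ((1-q)*exp x + q) - x*(1-q))"
        and f'="\<lambda>x. c*x + (1-q) - (1-q)*exp x/((1-q)*exp x + q)"])
    fix y :: real assume y: "0 \<le> y"
    have pos: "0 < (1-q)*exp y + q" using D[OF y] by linarith
    show "((\<lambda>x. c*x\<^sup>2/2 - (ln ((1-q)*exp x + q) - x*(1-q))) has_real_derivative
        c*y + (1-q) - (1-q)*exp y/((1-q)*exp y + q)) (at y)"
      using pos by (auto intro!: derivative_eq_intros simp: field_simps power2_eq_square)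
    show "0 \<le> c*y + (1-q) - (1-q)*exp y/((1-q)*exp y + q)" using F1[OF y] .
  qed (use t in auto)
  have pos: "0 < (1-q)*exp t + q" using D[OF t] by linarith
  have "ln ((1-q)*exp t + q) \<le> c*t\<^sup>2/2 + t*(1-q)" using F by linarith
  hence "exp (ln ((1-q)*exp t + q)) \<le> exp (c*t\<^sup>2/2 + t*(1-q))" by simp
  hence "(1-q)*exp t + q \<le> exp (c*t\<^sup>2/2) * exp (t*(1-q))" using pos by (simp add: exp_add)
  hence "((1-q)*exp t + q) * exp(-t*(1-q)) \<le> exp (c*t\<^sup>2/2) * exp (t*(1-q)) * exp(-t*(1-q))"
    by (rule mult_right_mono) simp
  also have "\<dots> = exp (c*t\<^sup>2/2)" by (simp flip: exp_add)
  finally have "((1-q)*exp t + q) * exp(-t*(1-q)) \<le> exp (c*t\<^sup>2/2)" .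
  moreover have "((1-q)*exp t + q) * exp(-t*(1-q)) = (1-q)*exp(t*q) + q*exp(-t*(1-q))"
    by (simp add: algebra_simps flip: exp_add)
  ultimately show ?thesis by simp
qed

lemma hc_small:
  fixes q y :: real assumes "0 \<le> q" "q \<le> 1/2" "1 \<le> y"
  shows "q*(1-q)*y \<le> (q*(1-q))*((1-q)*y+q)^2"
proof -
  have "(1-q)^2*y - q^2 \<ge> 0"
  proof -
    have "q^2 \<le> (1-q)^2" using assms by (intro power_mono) auto
    also have "\<dots> \<le> (1-q)^2*y" using assms by simp
    finally show ?thesis by simp
  qed
  hence "0 \<le> (y-1)*((1-q)^2*y - q^2)" using assms by simp
  hence "y \<le> ((1-q)*y+q)^2" by (simp add: algebra_simps power2_eq_square)
  thus ?thesis using assms by (intro mult_left_mono) auto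
qed

lemma hc_big:
  fixes q y :: real assumes "0 \<le> q" "q \<le> 1"
  shows "q*(1-q)*y \<le> (1/4)*((1-q)*y+q)^2"
proof -
  have "0 \<le> ((1-q)*y - q)^2" by simp
  thus ?thesis by (simp add: algebra_simps power2_eq_square)
qed



lemma chernoff_pi:
  fixes P :: "'b pmf" and Y :: "'b \<Rightarrow> real" and I :: "nat set"
  assumes fin: "finite I" and bnd: "\<And>x. \<bar>Y x\<bar> \<le> K"
  shows "measure_pmf.prob (Pi_pmf I d (\<lambda>_. P)) {Rs. a \<le> (\<Sum>j\<in>I. Y (Rs j))}
     \<le> exp(-a) * (measure_pmf.expectation P (\<lambda>x. exp (Y x)))^card I"
proof -
  let ?M = "Pi_pmf I d (\<lambda>_. P)"
  define u where "u = (\<lambda>Rs. \<Prod>j\<in>I. exp (Y (Rs j)))"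
  have u_eq: "u Rs = exp (\<Sum>j\<in>I. Y (Rs j))" for Rs
    unfolding u_def using fin by (simp add: exp_sum)
  have ev: "{Rs. a \<le> (\<Sum>j\<in>I. Y (Rs j))} = {Rs \<in> space (measure_pmf ?M). exp a \<le> u Rs}"
    by (auto simp: u_eq)
  have ebnd: "exp (Y x) \<le> exp K" for x using bnd[of x] by simp
  have intY: "integrable (measure_pmf P) (\<lambda>x. exp (Y x))"
    by (rule measure_pmf.integrable_const_bound[where B="exp K"]) (use ebnd in auto)
  have intu: "integrable (measure_pmf ?M) u"
  proof (rule measure_pmf.integrable_const_bound[where B="exp K ^ card I"])
    show "AE x in measure_pmf ?M. norm (u x) \<le> exp K ^ card I"
    proof (rule AE_pmfI)
      fix x
      have "(\<Prod>j\<in>I. exp (Y (x j))) \<le> (\<Prod>j\<in>I. exp K)"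
        by (intro prod_mono) (use ebnd in auto)
      thus "norm (u x) \<le> exp K ^ card I" by (simp add: u_def abs_prod)
    qed
  qed auto
  have "measure_pmf.prob ?M {Rs. a \<le> (\<Sum>j\<in>I. Y (Rs j))} \<le> measure_pmf.expectation ?M u / exp a"
    unfolding ev
    by (rule integral_Markov_inequality_measure[OF intu]) (auto simp: u_def intro!: prod_nonneg)
  also have "measure_pmf.expectation ?M u = (\<Prod>j\<in>I. measure_pmf.expectation P (\<lambda>x. exp (Y x)))"
    unfolding u_def
    by (rule expectation_prod_Pi_pmf[where f="\<lambda>_ x. exp (Y x)"]) (use fin intY in auto)
  also have "\<dots> = (measure_pmf.expectation P (\<lambda>x. exp (Y x)))^card I" by simp
  finally show ?thesis by (simp add: exp_minus field_simps)
qed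



lemma X01: "X S R = 0 \<or> X S R = 1"
  unfolding X_def by (cases "card (S \<inter> R)") auto

lemma X_range: "0 \<le> X S R" "X S R \<le> 1" "\<bar>X S R\<bar> \<le> 1"
  unfolding X_def by auto

lemma test:
  fixes P :: "'b set pmf" and S :: "'b set"
  defines "q \<equiv> measure_pmf.expectation P (X S)"
  shows "0 \<le> q \<and> q \<le> 1 \<and> (\<forall>g m r. measure_pmf.expectation P (\<lambda>R. g (m + r * X S R)) = (1-q)*g m + q * g (m+r))"
proof -
  have intX: "integrable (measure_pmf P) (X S)"
    by (rule measure_pmf.integrable_const_bound[where B=1]) (intro AE_pmfI, simp add: X_range(3), simp)
  have "q \<ge> 0" unfolding q_def by (intro Bochner_Integration.integral_nonneg_AE AE_pmfI X_range)
  moreover have "q \<le> measure_pmf.expectation P (\<lambda>_. 1::real)" unfolding q_def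
    by (intro integral_mono intX) (simp_all add: X_range)
  moreover have "\<forall>g m r. measure_pmf.expectation P (\<lambda>R. g (m + r * X S R)) = (1-q)*g m + q * g (m+r)"
  proof (intro allI)
    fix g :: "real \<Rightarrow> real" and m r :: real
    have "measure_pmf.expectation P (\<lambda>R. g (m + r * X S R)) = measure_pmf.expectation P (\<lambda>R. g m + X S R * (g (m+r) - g m))"
      apply (intro Bochner_Integration.integral_cong refl)
      subgoal for x using X01[of S x] by auto
      done
    also have "\<dots> = g m + q * (g (m+r) - g m)"
      using intX by (simp add: q_def)
    finally show "measure_pmf.expectation P (\<lambda>R. g (m + r * X S R)) = (1-q)*g m + q * g (m+r)"
      by (simp add: algebra_simps)
  qed
  ultimately show ?thesis by simp
qed


lemma W_facts:
  fixes r m q :: real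
  assumes hr: "0 < r" and hm: "0 \<le> m" and q: "0 \<le> q" "q \<le> 1"
  defines "ps \<equiv> min r ((r+m) + m - 2 * sqrt (m * (r+m)))"
  shows "r^2*(q*(1-q)) \<le> ps * (m + r*q)" "q > 1/2 \<Longrightarrow> r^2*(1/4) \<le> ps * (m + r*q)"
    "0 \<le> ps * (m + r*q)"
proof -
  define a where "a = sqrt m"
  define B where "B = sqrt (r+m)"
  have a2: "a^2 = m" using hm by (simp add: a_def)
  have B2: "B^2 = r + m" using hm hr by (simp add: B_def)
  have a0: "0 \<le> a" using hm by (simp add: a_def)
  have aB: "a \<le> B" unfolding a_def B_def using hr hm by (intro real_sqrt_le_mono) simp
  have sq: "sqrt (m*(r+m)) = a*B" by (simp add: a_def B_def real_sqrt_mult)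
  have "(r+m) + m - 2 * sqrt (m * (r+m)) = (B-a)^2"
    unfolding sq using a2 B2 by (simp add: power2_eq_square algebra_simps)
  moreover have "(B-a)^2 \<le> r"
  proof -
    have "a*a \<le> a*B" using a0 aB by (intro mult_left_mono)
    thus ?thesis using a2 B2 by (simp add: power2_eq_square algebra_simps)
  qed
  ultimately have ps: "ps = (B-a)^2" by (simp add: ps_def)
  have rr: "r = B^2 - a^2" using a2 B2 by simp
  have mm: "m + r*q = a^2 + (B^2-a^2)*q" using a2 rr by simp
  have e: "ps*(m+r*q) = (B-a)^2*(a^2+(B^2-a^2)*q)" by (simp only: ps mm)
  have e2: "r^2 = (B^2-a^2)^2" by (simp only: rr)
  have id1: "(B-a)^2*(a^2+(B^2-a^2)*q) - (B^2-a^2)^2*(q*(1-q)) = (B-a)^2 * ((B+a)*q - a)^2"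
    by (simp add: power2_eq_square algebra_simps)
  show "r^2*(q*(1-q)) \<le> ps * (m + r*q)"
  proof -
    have "0 \<le> (B-a)^2 * ((B+a)*q - a)^2" by simp
    thus ?thesis unfolding e e2 using id1 by linarith
  qed
  show "0 \<le> ps * (m + r*q)" using ps hm hr q by simp
  assume qh: "q > 1/2"
  have "(B^2-a^2)*(1/2) \<le> (B^2-a^2)*q"
    using qh rr hr by (intro mult_left_mono) auto
  hence "B^2/2 - a^2/2 \<le> (B^2-a^2)*q" by simp
  moreover have "(B+a)^2/4 = (B^2+a^2)/2 - (B-a)^2/4" by (simp add: power2_eq_square field_simps)
  ultimately have "(B+a)^2/4 \<le> a^2 + (B^2-a^2)*q"
  proof -
    assume h1: "B^2/2 - a^2/2 \<le> (B^2-a^2)*q" and h2: "(B+a)^2/4 = (B^2+a^2)/2 - (B-a)^2/4"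
    have "(B+a)^2/4 \<le> (B^2+a^2)/2" using h2 zero_le_power2[of "B-a"] by linarith
    also have "\<dots> \<le> a^2 + (B^2-a^2)*q" using h1 by (simp add: field_simps)
    finally show ?thesis .
  qed
  hence "(B-a)^2*((B+a)^2/4) \<le> (B-a)^2 * (a^2 + (B^2-a^2)*q)"
    by (intro mult_left_mono) auto
  moreover have "(B^2-a^2)^2*(1/4) = (B-a)^2*((B+a)^2/4)" by (simp add: power2_eq_square algebra_simps)
  ultimately show "r^2*(1/4) \<le> ps * (m + r*q)" unfolding e e2 by simp
qed



theorem lemma5:
  fixes V :: "'a set" and E :: "('a \<times> 'a) set" and p :: "'a \<times> 'a \<Rightarrow> real"
    and b :: "'a \<Rightarrow> real" and S :: "'a set" and T :: nat and lam :: real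
  assumes "finite V" and "E \<subseteq> V \<times> V"
    and "\<forall>e\<in>E. 0 < p e \<and> p e < 1"
    and "\<forall>u\<in>V. 0 \<le> b u"
    and "Gamma V b > 0" and "Phi V E p b > 0"
    and "S \<subseteq> V" and "lam > 0"
  defines "\<mu> \<equiv> measure_pmf.expectation (ibs_pmf V E p b) (\<lambda>R. Z V E p b S R)"
  shows "(measure_pmf.prob (Pi_pmf {1..T} {} (\<lambda>_. ibs_pmf V E p b))
            {Rs. (\<Sum>j\<in>{1..T}. Z V E p b S (Rs j)) - real T * \<mu> \<ge> lam}
          \<le> exp (- (lam\<^sup>2 / (2/3 * rho V E p b * lam + 2 * pS V E p b S * \<mu> * real T))))
       \<and> (measure_pmf.prob (Pi_pmf {1..T} {} (\<lambda>_. ibs_pmf V E p b))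
            {Rs. (\<Sum>j\<in>{1..T}. Z V E p b S (Rs j)) - real T * \<mu> \<le> - lam}
          \<le> exp (- (lam\<^sup>2 / (2 * pS V E p b S * \<mu> * real T))))"
proof -
  note hE = assms(3) and hb = assms(4) and hG = assms(5) and hPhi = assms(6)
    and hS = assms(7) and hlam = assms(8)
  define P where "P = ibs_pmf V E p b"
  define M where "M = Pi_pmf {1..T} ({}::'a set) (\<lambda>_. P)"
  define r where "r = rho V E p b"
  define m where "m = mu_min V E p b S"
  define ps where "ps = pS V E p b S"
  define Zf where "Zf = Z V E p b S"
  have r0: "0 < r" unfolding r_def rho_def using hG hPhi by simp
  have m0: "0 \<le> m" unfolding m_def mu_min_def
  proof (intro divide_nonneg_pos sum_nonneg mult_nonneg_nonneg hG)
    fix v assume v: "v \<in> S"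
    show "0 \<le> b v" using hb hS v by auto
    have "0 \<le> (\<Prod>w\<in>N_in E v. 1 - p (w, v))"
      by (intro prod_nonneg) (use hE in \<open>auto simp: N_in_def less_imp_le\<close>)
    thus "0 \<le> 1 - gamma E p v" by (simp add: gamma_def)
  qed
  have Zeq: "Zf R = m + r * X S R" for R
    by (simp add: Zf_def Z_def r_def m_def)
  have ps_eq: "ps = min r ((r+m) + m - 2 * sqrt (m * (r+m)))"
    by (simp add: ps_def pS_def mu_max_def r_def m_def add.commute)
  define q where "q = measure_pmf.expectation P (X S)"
  have q01: "0 \<le> q" "q \<le> 1" and Eg: "\<And>g. measure_pmf.expectation P (\<lambda>R. g (Zf R)) = (1-q)*g m + q * g (m+r)"
    using test[of P S] unfolding q_def[symmetric] Zeq by auto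
  have mu_eq: "\<mu> = m + r*q"
    using Eg[of "\<lambda>x. x"] unfolding \<mu>_def P_def[symmetric] Zf_def[symmetric] by (simp add: algebra_simps)
  define W where "W = ps * \<mu>"
  have W1: "r^2*(q*(1-q)) \<le> W" and W2: "q > 1/2 \<Longrightarrow> r^2*(1/4) \<le> W" and W0: "0 \<le> W"
    using W_facts[OF r0 m0 q01] unfolding W_def mu_eq ps_eq by auto
  have Zdev: "\<bar>Zf R - \<mu>\<bar> \<le> r" for R
  proof -
    have "Zf R - \<mu> = r * (X S R - q)" by (simp add: Zeq mu_eq algebra_simps)
    moreover have "\<bar>X S R - q\<bar> \<le> 1" using X_range[of S R] q01 by (simp add: abs_le_iff)
    ultimately show ?thesis using r0 by (simp add: abs_mult mult_left_le)
  qed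
  have sumeq: "(\<Sum>j\<in>{1..T}. c * (Zf (Rs j) - \<mu>)) = c * ((\<Sum>j\<in>{1..T}. Zf (Rs j)) - real T * \<mu>)" for c Rs
    by (simp add: sum_distrib_left[symmetric] sum_subtractf)
  have CH: "measure_pmf.prob M {Rs. a \<le> c * ((\<Sum>j\<in>{1..T}. Zf (Rs j)) - real T * \<mu>)}
      \<le> exp (- a) * (measure_pmf.expectation P (\<lambda>R. exp (c * (Zf R - \<mu>))))^T" for c a
  proof -
    have "\<bar>c * (Zf R - \<mu>)\<bar> \<le> \<bar>c\<bar> * r" for R
      using Zdev[of R] by (simp add: abs_mult mult_left_mono)
    from chernoff_pi[where I="{1..T}" and Y="\<lambda>R. c * (Zf R - \<mu>)" and P=P and d="{}" and a=a, OF _ this]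
    show ?thesis unfolding M_def sumeq by simp
  qed
  have powle: "x ^ T \<le> exp y ^ T" if "0 \<le> x" "x \<le> exp y" for x y :: real
    using that by (intro power_mono)
  have U: "measure_pmf.prob M {Rs. (\<Sum>j\<in>{1..T}. Zf (Rs j)) - real T * \<mu> \<ge> lam}
      \<le> exp (real T * (q*(1-q)*(exp (s*r) - 1 - s*r)) - s*lam)" if s0: "0 \<le> s" for s
  proof -
    have "measure_pmf.prob M {Rs. (\<Sum>j\<in>{1..T}. Zf (Rs j)) - real T * \<mu> \<ge> lam}
        \<le> measure_pmf.prob M {Rs. s*lam \<le> s * ((\<Sum>j\<in>{1..T}. Zf (Rs j)) - real T * \<mu>)}"
      by (intro measure_pmf.finite_measure_mono) (auto intro: mult_left_mono s0)
    also have "\<dots> \<le> exp (- (s*lam)) * (measure_pmf.expectation P (\<lambda>R. exp (s * (Zf R - \<mu>))))^T"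
      by (rule CH)
    also have "measure_pmf.expectation P (\<lambda>R. exp (s * (Zf R - \<mu>)))
        = (1-q)*exp(-(s*r)*q) + q*exp((s*r)*(1-q))"
      using Eg[of "\<lambda>z. exp (s * (z - \<mu>))"] by (simp add: mu_eq algebra_simps)
    also have "((1-q)*exp(-(s*r)*q) + q*exp((s*r)*(1-q)))^T \<le> exp (q*(1-q)*(exp (s*r) - 1 - (s*r)))^T"
      using q01 s0 r0 by (intro powle upper_mgf add_nonneg_nonneg mult_nonneg_nonneg) auto
    also have "exp (q*(1-q)*(exp (s*r) - 1 - (s*r)))^T = exp (real T * (q*(1-q)*(exp (s*r) - 1 - s*r)))"
      by (simp add: exp_of_nat_mult)
    finally show ?thesis by (simp add: mult_left_mono exp_add[symmetric])
  qed
  define c0 where "c0 = (if q \<le> 1/2 then q*(1-q) else 1/4)"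
  have hc: "q*(1-q)*y \<le> c0*((1-q)*y+q)^2" if "1 \<le> y" for y
    using hc_small[of q y] hc_big[of q y] q01 that by (auto simp: c0_def)
  have c0W: "c0 * r^2 \<le> W" using W1 W2 by (auto simp: c0_def mult.commute)
  have L: "measure_pmf.prob M {Rs. (\<Sum>j\<in>{1..T}. Zf (Rs j)) - real T * \<mu> \<le> - lam}
      \<le> exp (real T * (W * s\<^sup>2 / 2) - s*lam)" if s0: "0 \<le> s" for s
  proof -
    have "measure_pmf.prob M {Rs. (\<Sum>j\<in>{1..T}. Zf (Rs j)) - real T * \<mu> \<le> - lam}
        \<le> measure_pmf.prob M {Rs. s*lam \<le> (-s) * ((\<Sum>j\<in>{1..T}. Zf (Rs j)) - real T * \<mu>)}"
    proof (intro measure_pmf.finite_measure_mono subsetI)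
      fix Rs assume "Rs \<in> {Rs. (\<Sum>j\<in>{1..T}. Zf (Rs j)) - real T * \<mu> \<le> - lam}"
      hence "(\<Sum>j\<in>{1..T}. Zf (Rs j)) - real T * \<mu> \<le> - lam" by simp
      hence "s * lam \<le> s * (- ((\<Sum>j\<in>{1..T}. Zf (Rs j)) - real T * \<mu>))"
        by (intro mult_left_mono s0) linarith
      thus "Rs \<in> {Rs. s*lam \<le> (-s) * ((\<Sum>j\<in>{1..T}. Zf (Rs j)) - real T * \<mu>)}"
        by (simp add: algebra_simps)
    qed simp
    also have "\<dots> \<le> exp (- (s*lam)) * (measure_pmf.expectation P (\<lambda>R. exp ((-s) * (Zf R - \<mu>))))^T"
      by (rule CH)
    also have "measure_pmf.expectation P (\<lambda>R. exp ((-s) * (Zf R - \<mu>)))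
        = (1-q)*exp((s*r)*q) + q*exp(-(s*r)*(1-q))"
      using Eg[of "\<lambda>z. exp ((-s) * (z - \<mu>))"] by (simp add: mu_eq algebra_simps)
    also have "((1-q)*exp((s*r)*q) + q*exp(-(s*r)*(1-q)))^T \<le> exp (c0*(s*r)^2/2)^T"
      using q01 s0 r0 by (intro powle lower_mgf hc add_nonneg_nonneg mult_nonneg_nonneg) auto
    also have "exp (c0*(s*r)^2/2)^T \<le> exp (W * s\<^sup>2 / 2)^T"
    proof -
      have "c0*(s*r)^2/2 = (c0*r^2) * s\<^sup>2 / 2" by (simp add: power_mult_distrib)
      also have "\<dots> \<le> W * s\<^sup>2 / 2" using c0W by (intro divide_right_mono mult_right_mono) auto
      finally show ?thesis by (intro power_mono) auto
    qed
    also have "exp (W * s\<^sup>2 / 2)^T = exp (real T * (W * s\<^sup>2 / 2))"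
      by (simp only: exp_of_nat_mult)
    finally show ?thesis by (simp add: mult_left_mono exp_add[symmetric])
  qed
  define TW where "TW = real T * W"
  have TW0: "0 \<le> TW" using W0 by (simp add: TW_def)
  have TWeq: "ps * \<mu> * real T = TW" by (simp add: TW_def W_def)
  have Tq0: "0 \<le> real T * (q*(1-q))" using q01 by simp
  have TqW: "r^2 * (real T * (q*(1-q))) \<le> TW"
    using mult_left_mono[OF W1, of "real T"] by (simp add: TW_def algebra_simps)
  have up: "measure_pmf.prob M {Rs. (\<Sum>j\<in>{1..T}. Zf (Rs j)) - real T * \<mu> \<ge> lam}
      \<le> exp (- (lam\<^sup>2 / (2/3 * r * lam + 2 * ps * \<mu> * real T)))"
  proof (cases "TW > 0")
    case True
    define D where "D = TW + r*lam/3"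
    have D0: "0 < D" using True mult_pos_pos[OF r0 hlam] unfolding D_def by linarith
    define s where "s = lam / D"
    have s0: "0 \<le> s" using D0 hlam by (simp add: s_def)
    define t where "t = s * r"
    have t0: "0 \<le> t" using s0 r0 by (simp add: t_def)
    have t3: "t < 3" unfolding t_def s_def using D0 True r0 hlam by (simp add: D_def field_simps)
    have "real T * (q*(1-q)*(exp t - 1 - t)) = (real T * (q*(1-q))) * (exp t - 1 - t)" by simp
    also have "\<dots> \<le> (real T * (q*(1-q))) * (3*t\<^sup>2 / (2*(3-t)))"
      by (intro mult_left_mono bernstein_phi t0 t3 Tq0)
    also have "\<dots> \<le> (TW / r^2) * (3*t\<^sup>2 / (2*(3-t)))"
    proof (intro mult_right_mono)
      show "real T * (q * (1 - q)) \<le> TW / r\<^sup>2" using TqW r0 by (simp add: field_simps)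
      show "0 \<le> 3 * t\<^sup>2 / (2 * (3 - t))" using t3 by simp
    qed
    also have "\<dots> = s * lam / 2"
    proof -
      have tt: "t = r*lam/D" by (simp add: t_def s_def)
      have e3: "3 - t = 3*TW/D" unfolding tt using D0 by (simp add: D_def field_simps)
      have "(TW / r^2) * (3*t\<^sup>2 / (2*(3-t))) = (TW / r^2) * (3*(r*lam/D)\<^sup>2 / (2*(3*TW/D)))"
        by (subst e3) (simp only: tt)
      also have "\<dots> = lam^2/(2*D)" using D0 True r0 by (simp add: field_simps power2_eq_square)
      also have "\<dots> = s * lam / 2" by (simp add: s_def power2_eq_square)
      finally show ?thesis .
    qed
    finally have key: "real T * (q*(1-q)*(exp (s*r) - 1 - s*r)) - s*lam \<le> - (s*lam/2)"
      by (simp add: t_def)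
    have "s*lam/2 = lam\<^sup>2 / (2/3 * r * lam + 2 * ps * \<mu> * real T)"
    proof -
      have a1: "2 * ps * \<mu> * real T = 2*TW" using TWeq by simp
      show ?thesis unfolding a1 s_def using D0 by (simp add: D_def field_simps power2_eq_square)
    qed
    hence "real T * (q*(1-q)*(exp (s*r) - 1 - s*r)) - s*lam \<le> - (lam\<^sup>2 / (2/3 * r * lam + 2 * ps * \<mu> * real T))"
      using key by linarith
    thus ?thesis using U[OF s0] by (meson exp_le_cancel_iff order_trans)
  next
    case False
    hence TWz: "TW = 0" using TW0 by simp
    hence Tq: "real T * (q*(1-q)) = 0" using TqW Tq0 r0
      by (metis linorder_not_le mult_pos_pos order_antisym zero_less_power)
    have s0: "0 \<le> 3/(2*r)" using r0 by simp
    have "measure_pmf.prob M {Rs. (\<Sum>j\<in>{1..T}. Zf (Rs j)) - real T * \<mu> \<ge> lam}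
        \<le> exp (real T * (q*(1-q)*(exp (3/(2*r)*r) - 1 - 3/(2*r)*r)) - 3/(2*r)*lam)"
      by (rule U[OF s0])
    also have "real T * (q*(1-q)*(exp (3/(2*r)*r) - 1 - 3/(2*r)*r)) = (real T * (q*(1-q))) * (exp (3/(2*r)*r) - 1 - 3/(2*r)*r)"
      by (simp only: mult.assoc)
    also have "\<dots> = 0" by (simp only: Tq mult_zero_left)
    finally have "measure_pmf.prob M {Rs. (\<Sum>j\<in>{1..T}. Zf (Rs j)) - real T * \<mu> \<ge> lam}
        \<le> exp (- (3/(2*r)*lam))" by simp
    also have "3/(2*r)*lam = lam\<^sup>2 / (2/3 * r * lam + 2 * ps * \<mu> * real T)"
    proof -
      have a1: "2 * ps * \<mu> * real T = 0" using TWeq TWz by simp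
      show ?thesis unfolding a1 using r0 hlam by (simp add: field_simps power2_eq_square)
    qed
    finally show ?thesis .
  qed
  have low: "measure_pmf.prob M {Rs. (\<Sum>j\<in>{1..T}. Zf (Rs j)) - real T * \<mu> \<le> - lam}
      \<le> exp (- (lam\<^sup>2 / (2 * ps * \<mu> * real T)))"
  proof (cases "TW > 0")
    case True
    define s where "s = lam / TW"
    have s0: "0 \<le> s" using True hlam by (simp add: s_def)
    have "real T * (W * s\<^sup>2 / 2) - s*lam = - (lam\<^sup>2 / (2 * ps * \<mu> * real T))"
    proof -
      have a1: "2 * ps * \<mu> * real T = 2*TW" using TWeq by simp
      have a2: "real T * (W * s\<^sup>2 / 2) = TW * s\<^sup>2 / 2" by (simp add: TW_def)
      show ?thesis unfolding a1 a2 s_def using True by (simp add: field_simps power2_eq_square TW_def)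
    qed
    thus ?thesis using L[OF s0] by simp
  next
    case False
    hence z: "2 * ps * \<mu> * real T = 0" using TW0 TWeq by (simp add: mult.assoc)
    have e: "exp (- (lam\<^sup>2 / (2 * ps * \<mu> * real T))) = 1" by (simp only: z) simp
    show ?thesis unfolding e by (rule measure_pmf.prob_le_1)
  qed
  show ?thesis
    unfolding P_def[symmetric] M_def[symmetric] Zf_def[symmetric] r_def[symmetric] ps_def[symmetric]
    using up low by simp
qed

end
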